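(* Let $\mathbb{M}^3$ be Minkowski 3-space with inner product $\langle x,y\rangle_{\mathbb{L}}=-x_1y_1+x_2y_2+x_3y_3$. Let $\sigma=\sigma(u,v)$ be a smooth surface in $\mathbb{M}^3$ and let $\{t,n,b\}$ be smooth vector fields along $\sigma$ with $\langle t,t\rangle_{\mathbb{L}}=1$, $\langle n,n\rangle_{\mathbb{L}}=-1$, $\langle b,b\rangle_{\mathbb{L}}=1$, pairwise orthogonal, such that $\sigma_u=t$, $\sigma_v=\lambda b$ for a nowhere-vanishing function $\lambda$, and $$t_u=-\kappa n,\qquad n_u=-\kappa t-\tau b,\qquad b_u=-\tau n$$ for functions $\kappa,\tau$ (so each $u$-curve is a unit-speed spacelike curve with timelike principal normal $n$, curvature $\kappa$ and torsion $\tau$, and is a geodesic of $\sigma$). Assume there are constants $A,B$, not both zero, with $A\kappa+B\tau=1$, and that $\tau$ vanishes nowhere. Define $$\sigma^*(u,v)=\sigma(u,v)+A\,n(u,v),\qquad t^*=\frac{Bt-Ab}{\sqrt{A^2+B^2}},\qquad b^*=\frac{At+Bb}{\sqrt{A^2+B^2}},$$ and along each $u$-curve let $u^*$ be a parameter with $du^*/du=\sqrt{A^2+B^2}\,\tau$. Then: (1) $\sigma^*_u=\tau(Bt-Ab)$, so $t^*=\partial\sigma^*/\partial u^*$ is a unit spacelike vector, and $n$ is orthogonal to both $\sigma^*_u$ and $\sigma^*_v$; (2) $\|\sigma-\sigma^*\|=\sqrt{|\langle \sigma-\sigma^*,\sigma-\sigma^*\rangle_{\mathbb{L}}|}$ is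 constant, $\langle\sigma^*-\sigma,b\rangle_{\mathbb{L}}=0$, $\langle\sigma^*-\sigma,b^*\rangle_{\mathbb{L}}=0$, and $\langle b,b^*\rangle_{\mathbb{L}}=B/\sqrt{A^2+B^2}$ is constant; (3) $\partial t^*/\partial u^*=-\kappa^* n$ and $\partial b^*/\partial u^*=-\tau^* n$, where $$\kappa^*=\frac{B\kappa-A\tau}{(A^2+B^2)\tau},\qquad \tau^*=\frac{1}{(A^2+B^2)\tau}.$$
   Context: A vector $x\in\mathbb{M}^3$ is spacelike if $\langle x,x\rangle_{\mathbb{L}}>0$ or $x=0$, timelike if $\langle x,x\rangle_{\mathbb{L}}<0$. A surface of this type (spanned by a one-parameter family of geodesic Bertrand curves with constants $A,B$, $A\kappa+B\tau=1$) is called a Razzaboni surface, and the map $\sigma\mapsto\sigma^*$ satisfying properties (2) is called a Razzaboni transformation, $\sigma^*$ the dual Razzaboni surface. *)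

theory Defs
  imports "HOL-Analysis.Analysis"
begin

definition lor :: "real^3 \<Rightarrow> real^3 \<Rightarrow> real" where
  "lor x y = - (x$1 * y$1) + x$2 * y$2 + x$3 * y$3"

definition lnorm :: "real^3 \<Rightarrow> real" where
  "lnorm x = sqrt \<bar>lor x x\<bar>"

end

theory Submission
  imports Defs
begin

lemma lor_add_left: "lor (x + y) z = lor x z + lor y z"
  by (simp add: lor_def algebra_simps)
lemma lor_add_right: "lor z (x + y) = lor z x + lor z y"
  by (simp add: lor_def algebra_simps)
lemma lor_diff_left: "lor (x - y) z = lor x z - lor y z"
  by (simp add: lor_def algebra_simps)
lemma lor_diff_right: "lor z (x - y) = lor z x - lor z y"
  by (simp add: lor_def algebra_simps)
lemma lor_scale_left: "lor (c *\<^sub>R x) z = c * lor x z"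
  by (simp add: lor_def algebra_simps)
lemma lor_scale_right: "lor z (c *\<^sub>R x) = c * lor z x"
  by (simp add: lor_def algebra_simps)
lemma lor_minus_left: "lor (- x) z = - lor x z"
  by (simp add: lor_def algebra_simps)
lemma lor_minus_right: "lor z (- x) = - lor z x"
  by (simp add: lor_def algebra_simps)
lemma lor_comm: "lor x y = lor y x"
  by (simp add: lor_def algebra_simps)

lemmas lor_simps = lor_add_left lor_add_right lor_diff_left lor_diff_right
  lor_scale_left lor_scale_right lor_minus_left lor_minus_right

lemma hvd_cscale[derivative_intros]:
  "(f has_vector_derivative f') F \<Longrightarrow> ((\<lambda>x. c *\<^sub>R f x) has_vector_derivative c *\<^sub>R f') F"
  by (rule bounded_linear.has_vector_derivative[OF bounded_linear_scaleR_right])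

lemma bb_lor: "bounded_bilinear lor"
proof
  fix a a' b b' :: "real^3" and r :: real
  show "lor (a + a') b = lor a b + lor a' b" by (rule lor_add_left)
  show "lor a (b + b') = lor a b + lor a b'" by (rule lor_add_right)
  show "lor (r *\<^sub>R a) b = r *\<^sub>R lor a b" by (simp add: lor_scale_left)
  show "lor a (r *\<^sub>R b) = r *\<^sub>R lor a b" by (simp add: lor_scale_right)
next
  show "\<exists>K. \<forall>a b. norm (lor a b) \<le> norm a * norm b * K"
  proof (intro exI allI)
    fix a b :: "real^3"
    have h: "\<And>i. \<bar>a$i * b$i\<bar> \<le> norm a * norm b"
      by (simp add: abs_mult mult_mono component_le_norm_cart)
    have "norm (lor a b) \<le> \<bar>a$1 * b$1\<bar> + \<bar>a$2 * b$2\<bar> + \<bar>a$3 * b$3\<bar>"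
      by (simp add: lor_def)
    also have "\<dots> \<le> norm a * norm b * 3" using h[of 1] h[of 2] h[of 3] by linarith
    finally show "norm (lor a b) \<le> norm a * norm b * 3" .
  qed
qed

theorem mainTheorem1:
  fixes U :: "(real \<times> real) set"
    and \<sigma> t n b :: "real \<times> real \<Rightarrow> real^3"
    and lam \<kappa> \<tau> :: "real \<times> real \<Rightarrow> real"
    and A B :: real
  assumes U_open: "open U"
    and orth: "\<And>p. p \<in> U \<Longrightarrow> lor (t p) (t p) = 1 \<and> lor (n p) (n p) = -1 \<and> lor (b p) (b p) = 1
                 \<and> lor (t p) (n p) = 0 \<and> lor (t p) (b p) = 0 \<and> lor (n p) (b p) = 0"
    and sigma_u: "\<And>u v. (u,v) \<in> U \<Longrightarrow> ((\<lambda>u. \<sigma> (u,v)) has_vector_derivative t (u,v)) (at u)"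
    and sigma_v: "\<And>u v. (u,v) \<in> U \<Longrightarrow> ((\<lambda>v. \<sigma> (u,v)) has_vector_derivative lam (u,v) *\<^sub>R b (u,v)) (at v)"
    and lam_nz: "\<And>p. p \<in> U \<Longrightarrow> lam p \<noteq> 0"
    and t_u: "\<And>u v. (u,v) \<in> U \<Longrightarrow> ((\<lambda>u. t (u,v)) has_vector_derivative - \<kappa> (u,v) *\<^sub>R n (u,v)) (at u)"
    and n_u: "\<And>u v. (u,v) \<in> U \<Longrightarrow> ((\<lambda>u. n (u,v)) has_vector_derivative
                 - \<kappa> (u,v) *\<^sub>R t (u,v) - \<tau> (u,v) *\<^sub>R b (u,v)) (at u)"
    and b_u: "\<And>u v. (u,v) \<in> U \<Longrightarrow> ((\<lambda>u. b (u,v)) has_vector_derivative - \<tau> (u,v) *\<^sub>R n (u,v)) (at u)"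
    and n_v: "\<And>u v. (u,v) \<in> U \<Longrightarrow> (\<lambda>v. n (u,v)) differentiable (at v)"
    and AB: "A \<noteq> 0 \<or> B \<noteq> 0"
    and bertrand: "\<And>p. p \<in> U \<Longrightarrow> A * \<kappa> p + B * \<tau> p = 1"
    and tau_nz: "\<And>p. p \<in> U \<Longrightarrow> \<tau> p \<noteq> 0"
  defines "\<sigma>s \<equiv> (\<lambda>p. \<sigma> p + A *\<^sub>R n p)"
    and "ts \<equiv> (\<lambda>p. (1 / sqrt (A\<^sup>2 + B\<^sup>2)) *\<^sub>R (B *\<^sub>R t p - A *\<^sub>R b p))"
    and "bs \<equiv> (\<lambda>p. (1 / sqrt (A\<^sup>2 + B\<^sup>2)) *\<^sub>R (A *\<^sub>R t p + B *\<^sub>R b p))"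
    and "\<kappa>s \<equiv> (\<lambda>p. (B * \<kappa> p - A * \<tau> p) / ((A\<^sup>2 + B\<^sup>2) * \<tau> p))"
    and "\<tau>s \<equiv> (\<lambda>p. 1 / ((A\<^sup>2 + B\<^sup>2) * \<tau> p))"
  shows
    \<comment> \<open>(1)\<close>
    "(\<forall>u v. (u,v) \<in> U \<longrightarrow>
        ((\<lambda>u. \<sigma>s (u,v)) has_vector_derivative \<tau> (u,v) *\<^sub>R (B *\<^sub>R t (u,v) - A *\<^sub>R b (u,v))) (at u)
      \<and> lor (ts (u,v)) (ts (u,v)) = 1
      \<and> lor (n (u,v)) (\<tau> (u,v) *\<^sub>R (B *\<^sub>R t (u,v) - A *\<^sub>R b (u,v))) = 0
      \<and> (\<exists>w. ((\<lambda>v. \<sigma>s (u,v)) has_vector_derivative w) (at v) \<and> lor (n (u,v)) w = 0))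
   \<and> (\<forall>v \<phi> S s. open S \<and> s \<in> S \<and> (\<forall>s'\<in>S. (\<phi> s', v) \<in> U \<and>
          (\<phi> has_real_derivative 1 / (sqrt (A\<^sup>2 + B\<^sup>2) * \<tau> (\<phi> s', v))) (at s')) \<longrightarrow>
        ((\<lambda>s. \<sigma>s (\<phi> s, v)) has_vector_derivative ts (\<phi> s, v)) (at s))
    \<comment> \<open>(2)\<close>
   \<and> (\<exists>c. \<forall>p\<in>U. lnorm (\<sigma> p - \<sigma>s p) = c)
   \<and> (\<forall>p\<in>U. lor (\<sigma>s p - \<sigma> p) (b p) = 0 \<and> lor (\<sigma>s p - \<sigma> p) (bs p) = 0
        \<and> lor (b p) (bs p) = B / sqrt (A\<^sup>2 + B\<^sup>2))
    \<comment> \<open>(3)\<close>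
   \<and> (\<forall>v \<phi> S s. open S \<and> s \<in> S \<and> (\<forall>s'\<in>S. (\<phi> s', v) \<in> U \<and>
          (\<phi> has_real_derivative 1 / (sqrt (A\<^sup>2 + B\<^sup>2) * \<tau> (\<phi> s', v))) (at s')) \<longrightarrow>
        ((\<lambda>s. ts (\<phi> s, v)) has_vector_derivative - \<kappa>s (\<phi> s, v) *\<^sub>R n (\<phi> s, v)) (at s)
      \<and> ((\<lambda>s. bs (\<phi> s, v)) has_vector_derivative - \<tau>s (\<phi> s, v) *\<^sub>R n (\<phi> s, v)) (at s))"
proof -
  have S2: "A\<^sup>2 + B\<^sup>2 > 0" using AB by (auto simp: sum_power2_gt_zero_iff)
  define q where "q = sqrt (A\<^sup>2 + B\<^sup>2)"
  have q0: "q > 0" using S2 by (simp add: q_def)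
  have qq: "q * q = A\<^sup>2 + B\<^sup>2" using S2 by (simp add: q_def)
  have qq2: "q\<^sup>2 = A\<^sup>2 + B\<^sup>2" using qq by (simp add: power2_eq_square)
  have ss_u: "((\<lambda>u. \<sigma>s (u,v)) has_vector_derivative \<tau> (u,v) *\<^sub>R (B *\<^sub>R t (u,v) - A *\<^sub>R b (u,v))) (at u)"
    if uv: "(u,v) \<in> U" for u v
  proof -
    have "((\<lambda>u. \<sigma>s (u,v)) has_vector_derivative t (u,v) + A *\<^sub>R (- \<kappa> (u,v) *\<^sub>R t (u,v) - \<tau> (u,v) *\<^sub>R b (u,v))) (at u)"
      unfolding \<sigma>s_def
      by (intro derivative_intros sigma_u[OF uv] n_u[OF uv])
    moreover have "t (u,v) + A *\<^sub>R (- \<kappa> (u,v) *\<^sub>R t (u,v) - \<tau> (u,v) *\<^sub>R b (u,v))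
        = \<tau> (u,v) *\<^sub>R (B *\<^sub>R t (u,v) - A *\<^sub>R b (u,v))"
    proof -
      have "1 - A * \<kappa> (u,v) = B * \<tau> (u,v)" using bertrand[OF uv] by linarith
      have "t (u,v) + A *\<^sub>R (- \<kappa> (u,v) *\<^sub>R t (u,v) - \<tau> (u,v) *\<^sub>R b (u,v))
          = (1 - A * \<kappa> (u,v)) *\<^sub>R t (u,v) - (A * \<tau> (u,v)) *\<^sub>R b (u,v)"
        by (simp add: algebra_simps)
      also have "\<dots> = \<tau> (u,v) *\<^sub>R (B *\<^sub>R t (u,v) - A *\<^sub>R b (u,v))"
        unfolding \<open>1 - A * \<kappa> (u,v) = B * \<tau> (u,v)\<close> by (simp add: algebra_simps)
      finally show ?thesis .
    qed
    ultimately show ?thesis by simp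
  qed
  have P1: "\<forall>u v. (u,v) \<in> U \<longrightarrow>
        ((\<lambda>u. \<sigma>s (u,v)) has_vector_derivative \<tau> (u,v) *\<^sub>R (B *\<^sub>R t (u,v) - A *\<^sub>R b (u,v))) (at u)
      \<and> lor (ts (u,v)) (ts (u,v)) = 1
      \<and> lor (n (u,v)) (\<tau> (u,v) *\<^sub>R (B *\<^sub>R t (u,v) - A *\<^sub>R b (u,v))) = 0
      \<and> (\<exists>w. ((\<lambda>v. \<sigma>s (u,v)) has_vector_derivative w) (at v) \<and> lor (n (u,v)) w = 0)"
  proof (intro allI impI conjI)
    fix u v assume uv: "(u,v) \<in> U"
    note o = orth[OF uv]
    show "((\<lambda>u. \<sigma>s (u,v)) has_vector_derivative \<tau> (u,v) *\<^sub>R (B *\<^sub>R t (u,v) - A *\<^sub>R b (u,v))) (at u)"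
      by (rule ss_u[OF uv])
    have "lor (ts (u,v)) (ts (u,v)) = (1/q) * (1/q) * (B*B + A*A)"
      using o lor_comm[of "t (u,v)" "b (u,v)"]
      by (simp add: ts_def q_def[symmetric] lor_simps algebra_simps)
    also have "\<dots> = 1" using qq q0 AB by (simp add: field_simps power2_eq_square)
    finally show "lor (ts (u,v)) (ts (u,v)) = 1" .
    show "lor (n (u,v)) (\<tau> (u,v) *\<^sub>R (B *\<^sub>R t (u,v) - A *\<^sub>R b (u,v))) = 0"
      using o lor_comm[of "t (u,v)" "n (u,v)"] by (simp add: lor_simps)
    obtain n' where n': "((\<lambda>v. n (u,v)) has_vector_derivative n') (at v)"
      using n_v[OF uv] by (auto simp: differentiable_iff_scaleR has_vector_derivative_def)
    have oV: "open ((\<lambda>v'. (u,v')) -` U)"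
      by (rule open_vimage[OF U_open]) (intro continuous_intros)
    have g1: "((\<lambda>v'. lor (n (u,v')) (n (u,v'))) has_vector_derivative
               (lor (n (u,v)) n' + lor n' (n (u,v)))) (at v)"
      by (rule bounded_bilinear.has_vector_derivative[OF bb_lor n' n'])
    have g2: "((\<lambda>v'. lor (n (u,v')) (n (u,v'))) has_vector_derivative 0) (at v)"
      by (rule has_vector_derivative_transform_within_open[where f="\<lambda>_. -1", OF _ oV])
         (use uv orth in auto)
    have "lor (n (u,v)) n' + lor n' (n (u,v)) = 0"
      using g1 g2 vector_derivative_unique_at by blast
    hence nn': "lor (n (u,v)) n' = 0" using lor_comm[of n' "n (u,v)"] by simp
    show "\<exists>w. ((\<lambda>v. \<sigma>s (u,v)) has_vector_derivative w) (at v) \<and> lor (n (u,v)) w = 0"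
    proof (intro exI conjI)
      show "((\<lambda>v. \<sigma>s (u,v)) has_vector_derivative lam (u,v) *\<^sub>R b (u,v) + A *\<^sub>R n') (at v)"
        unfolding \<sigma>s_def by (intro derivative_intros sigma_v[OF uv] n')
      show "lor (n (u,v)) (lam (u,v) *\<^sub>R b (u,v) + A *\<^sub>R n') = 0"
        using o nn' by (simp add: lor_simps)
    qed
  qed
  have chain: "((\<lambda>s. F (\<phi> s, v)) has_vector_derivative G (\<phi> s, v)) (at s)"
    if Fd: "\<And>u. (u,v) \<in> U \<Longrightarrow> ((\<lambda>u. F (u,v)) has_vector_derivative H (u,v)) (at u)"
      and HG: "\<And>u. (u,v) \<in> U \<Longrightarrow> (1 / (q * \<tau> (u,v))) *\<^sub>R H (u,v) = G (u,v)"
      and h: "open S \<and> s \<in> S \<and> (\<forall>s'\<in>S. (\<phi> s', v) \<in> U \<and>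
          (\<phi> has_real_derivative 1 / (sqrt (A\<^sup>2 + B\<^sup>2) * \<tau> (\<phi> s', v))) (at s'))"
    for F :: "real \<times> real \<Rightarrow> real^3" and G H v \<phi> S s
  proof -
    have sU: "(\<phi> s, v) \<in> U" and pd: "(\<phi> has_real_derivative 1 / (q * \<tau> (\<phi> s, v))) (at s)"
      using h by (auto simp: q_def)
    have pd': "(\<phi> has_vector_derivative 1 / (q * \<tau> (\<phi> s, v))) (at s)"
      using pd by (simp add: has_real_derivative_iff_has_vector_derivative)
    have "((\<lambda>u. F (u,v)) \<circ> \<phi> has_vector_derivative (1 / (q * \<tau> (\<phi> s, v))) *\<^sub>R H (\<phi> s, v)) (at s)"
      by (rule vector_diff_chain_at[OF pd' Fd[OF sU]])
    thus ?thesis using HG[OF sU] by (simp add: o_def)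
  qed
  have P1b: "\<forall>v \<phi> S s. open S \<and> s \<in> S \<and> (\<forall>s'\<in>S. (\<phi> s', v) \<in> U \<and>
          (\<phi> has_real_derivative 1 / (sqrt (A\<^sup>2 + B\<^sup>2) * \<tau> (\<phi> s', v))) (at s')) \<longrightarrow>
        ((\<lambda>s. \<sigma>s (\<phi> s, v)) has_vector_derivative ts (\<phi> s, v)) (at s)"
  proof (intro allI impI)
    fix v \<phi> S s
    assume h: "open S \<and> s \<in> S \<and> (\<forall>s'\<in>S. (\<phi> s', v) \<in> U \<and>
          (\<phi> has_real_derivative 1 / (sqrt (A\<^sup>2 + B\<^sup>2) * \<tau> (\<phi> s', v))) (at s'))"
    show "((\<lambda>s. \<sigma>s (\<phi> s, v)) has_vector_derivative ts (\<phi> s, v)) (at s)"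
    proof (rule chain[OF ss_u _ h])
      fix u assume uv: "(u,v) \<in> U"
      show "(1 / (q * \<tau> (u,v))) *\<^sub>R (\<tau> (u,v) *\<^sub>R (B *\<^sub>R t (u,v) - A *\<^sub>R b (u,v))) = ts (u,v)"
        using tau_nz[OF uv] q0 by (simp add: ts_def q_def[symmetric])
    qed
  qed
  have P2a: "\<exists>c. \<forall>p\<in>U. lnorm (\<sigma> p - \<sigma>s p) = c"
  proof (intro exI ballI)
    fix p assume "p \<in> U"
    then show "lnorm (\<sigma> p - \<sigma>s p) = \<bar>A\<bar>"
      using orth[of p] by (simp add: lnorm_def \<sigma>s_def lor_simps real_sqrt_abs2 flip: power2_eq_square)
  qed
  have P2b: "\<forall>p\<in>U. lor (\<sigma>s p - \<sigma> p) (b p) = 0 \<and> lor (\<sigma>s p - \<sigma> p) (bs p) = 0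
        \<and> lor (b p) (bs p) = B / sqrt (A\<^sup>2 + B\<^sup>2)"
  proof
    fix p assume "p \<in> U"
    note o = orth[OF this]
    show "lor (\<sigma>s p - \<sigma> p) (b p) = 0 \<and> lor (\<sigma>s p - \<sigma> p) (bs p) = 0
        \<and> lor (b p) (bs p) = B / sqrt (A\<^sup>2 + B\<^sup>2)"
      using o lor_comm[of "t p" "b p"] lor_comm[of "t p" "n p"] by (simp add: \<sigma>s_def bs_def lor_simps)
  qed
  have P3: "\<forall>v \<phi> S s. open S \<and> s \<in> S \<and> (\<forall>s'\<in>S. (\<phi> s', v) \<in> U \<and>
          (\<phi> has_real_derivative 1 / (sqrt (A\<^sup>2 + B\<^sup>2) * \<tau> (\<phi> s', v))) (at s')) \<longrightarrow>
        ((\<lambda>s. ts (\<phi> s, v)) has_vector_derivative - \<kappa>s (\<phi> s, v) *\<^sub>R n (\<phi> s, v)) (at s)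
      \<and> ((\<lambda>s. bs (\<phi> s, v)) has_vector_derivative - \<tau>s (\<phi> s, v) *\<^sub>R n (\<phi> s, v)) (at s)"
  proof (intro allI impI conjI)
    fix v \<phi> S s
    assume h: "open S \<and> s \<in> S \<and> (\<forall>s'\<in>S. (\<phi> s', v) \<in> U \<and>
          (\<phi> has_real_derivative 1 / (sqrt (A\<^sup>2 + B\<^sup>2) * \<tau> (\<phi> s', v))) (at s'))"
    have tsd: "((\<lambda>u. ts (u,v)) has_vector_derivative
         (1/q) *\<^sub>R (B *\<^sub>R (- \<kappa> (u,v) *\<^sub>R n (u,v)) - A *\<^sub>R (- \<tau> (u,v) *\<^sub>R n (u,v)))) (at u)"
      if uv: "(u,v) \<in> U" for u
      unfolding ts_def q_def[symmetric]
      by (intro derivative_intros t_u[OF uv] b_u[OF uv])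
    show "((\<lambda>s. ts (\<phi> s, v)) has_vector_derivative - \<kappa>s (\<phi> s, v) *\<^sub>R n (\<phi> s, v)) (at s)"
    proof (rule chain[OF tsd _ h])
      fix u assume uv: "(u,v) \<in> U"
      have e: "(1/q) *\<^sub>R (B *\<^sub>R (- \<kappa> (u,v) *\<^sub>R n (u,v)) - A *\<^sub>R (- \<tau> (u,v) *\<^sub>R n (u,v)))
          = (- (B * \<kappa> (u,v) - A * \<tau> (u,v)) / q) *\<^sub>R n (u,v)"
        by (simp add: algebra_simps diff_divide_distrib add_divide_distrib)
      show "(1 / (q * \<tau> (u,v))) *\<^sub>R ((1/q) *\<^sub>R (B *\<^sub>R (- \<kappa> (u,v) *\<^sub>R n (u,v)) - A *\<^sub>R (- \<tau> (u,v) *\<^sub>R n (u,v))))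
          = - \<kappa>s (u,v) *\<^sub>R n (u,v)"
      proof -
        have c: "(1 / (q * \<tau> (u,v))) * (- (B * \<kappa> (u,v) - A * \<tau> (u,v)) / q) = - \<kappa>s (u,v)"
          unfolding \<kappa>s_def qq2[symmetric] using tau_nz[OF uv] q0
          by (simp add: field_simps power2_eq_square)
        show ?thesis by (subst e) (simp only: scaleR_scaleR c)
      qed
    qed
    have bsd: "((\<lambda>u. bs (u,v)) has_vector_derivative
         (1/q) *\<^sub>R (A *\<^sub>R (- \<kappa> (u,v) *\<^sub>R n (u,v)) + B *\<^sub>R (- \<tau> (u,v) *\<^sub>R n (u,v)))) (at u)"
      if uv: "(u,v) \<in> U" for u
      unfolding bs_def q_def[symmetric]
      by (intro derivative_intros t_u[OF uv] b_u[OF uv])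
    show "((\<lambda>s. bs (\<phi> s, v)) has_vector_derivative - \<tau>s (\<phi> s, v) *\<^sub>R n (\<phi> s, v)) (at s)"
    proof (rule chain[OF bsd _ h])
      fix u assume uv: "(u,v) \<in> U"
      have e: "(1/q) *\<^sub>R (A *\<^sub>R (- \<kappa> (u,v) *\<^sub>R n (u,v)) + B *\<^sub>R (- \<tau> (u,v) *\<^sub>R n (u,v)))
          = (- (A * \<kappa> (u,v) + B * \<tau> (u,v)) / q) *\<^sub>R n (u,v)"
        by (simp add: algebra_simps diff_divide_distrib add_divide_distrib)
      show "(1 / (q * \<tau> (u,v))) *\<^sub>R ((1/q) *\<^sub>R (A *\<^sub>R (- \<kappa> (u,v) *\<^sub>R n (u,v)) + B *\<^sub>R (- \<tau> (u,v) *\<^sub>R n (u,v))))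
          = - \<tau>s (u,v) *\<^sub>R n (u,v)"
      proof -
        have c: "(1 / (q * \<tau> (u,v))) * (- (A * \<kappa> (u,v) + B * \<tau> (u,v)) / q) = - \<tau>s (u,v)"
          unfolding \<tau>s_def qq2[symmetric] bertrand[OF uv] using tau_nz[OF uv] q0
          by (simp add: field_simps power2_eq_square)
        show ?thesis by (subst e) (simp only: scaleR_scaleR c)
      qed
    qed
  qed
  show ?thesis using P1 P1b P2a P2b P3 by blast
qed

end
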